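(* Let $N\ge 5$ be odd, and let $G_{N,1}$ be the graph with vertex set $\mathbb Z_N=\{0,1,\dots,N-1\}$ in which two distinct vertices $i,j$ are adjacent if and only if $j-i\not\equiv\pm1\pmod N$. Put $\Delta=\sqrt{N(N-4)}$ and $\rho=\frac{N-2+\Delta}{2}$. For $u,v\in\mathbb Z_N$ let $q\in\{0,1,\dots,N-1\}$ with $q\equiv v-u\pmod N$. Then the effective resistance between $u$ and $v$ in $G_{N,1}$ (all edges of unit conductance) is \[ R^{(1)}(u,v)=\frac{2}{\Delta(\rho^N+1)}\left\{\rho^N-1+(-1)^q(\rho^q-\rho^{N-q})\right\}. \] Moreover, the right-hand side is invariant under $q\mapsto N-q$, so the resistance depends only on $h(u,v)=\min\{q,N-q\}$, and $R^{(1)}(u,v)>0$ whenever $u\ne v$.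
   Context: The effective resistance is that of the electrical network obtained by placing a unit resistor on each edge; equivalently $R(u,v)=(e_u-e_v)^T L^{+}(e_u-e_v)$ with $L^+$ the Moore–Penrose pseudoinverse of the Laplacian. *)

theory Defs
  imports Complex_Main "Jordan_Normal_Form.Matrix"
begin

definition adjN :: "nat \<Rightarrow> nat \<Rightarrow> nat \<Rightarrow> bool" where
  "adjN N i j \<longleftrightarrow> i < N \<and> j < N \<and> i \<noteq> j \<and>
     (int j - int i) mod int N \<noteq> 1 \<and> (int j - int i) mod int N \<noteq> (int N - 1)"

definition degN :: "nat \<Rightarrow> nat \<Rightarrow> nat" where
  "degN N i = card {j. j < N \<and> adjN N i j}"

definition laplacianN :: "nat \<Rightarrow> real mat" where
  "laplacianN N = mat N N (\<lambda>(i,j). if i = j then real (degN N i)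
                                  else if adjN N i j then -1 else 0)"

definition pinv :: "real mat \<Rightarrow> real mat" where
  "pinv A = (THE X. X \<in> carrier_mat (dim_col A) (dim_row A) \<and>
                    A * X * A = A \<and> X * A * X = X \<and>
                    transpose_mat (A * X) = A * X \<and> transpose_mat (X * A) = X * A)"

definition eff_res :: "nat \<Rightarrow> nat \<Rightarrow> nat \<Rightarrow> real" where
  "eff_res N u v = (let x = unit_vec N u - unit_vec N v in x \<bullet> (pinv (laplacianN N) *\<^sub>v x))"

definition DeltaN :: "nat \<Rightarrow> real" where
  "DeltaN N = sqrt (real N * (real N - 4))"

definition rhoN :: "nat \<Rightarrow> real" where
  "rhoN N = (real N - 2 + DeltaN N) / 2"

definition resist_formula :: "nat \<Rightarrow> nat \<Rightarrow> real" where
  "resist_formula N q = 2 / (DeltaN N * (rhoN N ^ N + 1)) *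
     (rhoN N ^ N - 1 + (-1) ^ q * (rhoN N ^ q - rhoN N ^ (N - q)))"

end

theory Submission
  imports Defs
begin




lemma mod_add_inj: "x < (N::nat) \<Longrightarrow> y < N \<Longrightarrow> (x + a) mod N = (y + a) mod N \<Longrightarrow> x = y"
proof -
  assume h: "x < (N::nat)" "y < N" "(x + a) mod N = (y + a) mod N"
  have "int ((x + a) mod N) = int ((y + a) mod N)" using h by simp
  then have "(int x + int a) mod int N = (int y + int a) mod int N" by (simp add: zmod_int)
  then have "int N dvd (int x + int a) - (int y + int a)" by (simp add: mod_eq_dvd_iff)
  then have d: "int N dvd int x - int y" by simp
  then obtain k where k: "int x - int y = int N * k" by (auto elim: dvdE)
  show "x = y"
  proof (cases "k = 0")
    case True then show ?thesis using k by simp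
  next
    case False
    then have "1 \<le> \<bar>k\<bar>" by simp
    then have "int N * 1 \<le> int N * \<bar>k\<bar>" by (intro mult_left_mono) simp_all
    then have "\<bar>int N * k\<bar> \<ge> int N" by (simp add: abs_mult)
    then show ?thesis using k h by linarith
  qed
qed
lemma sum_shift_mod:
  fixes f :: "nat \<Rightarrow> real"
  assumes "0 < N"
  shows "(\<Sum>m<N. f ((m + a) mod N)) = (\<Sum>m<N. f m)"
proof -
  have inj: "inj_on (\<lambda>m. (m + a) mod N) {..<N}"
  proof (rule inj_onI)
    fix x y assume "x \<in> {..<N}" "y \<in> {..<N}" "(x + a) mod N = (y + a) mod N"
    then show "x = y" by (intro mod_add_inj[of x N y a]) simp_all
  qed
  have img: "(\<lambda>m. (m + a) mod N) ` {..<N} = {..<N}"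
  proof (rule endo_inj_surj)
    show "(\<lambda>m. (m + a) mod N) ` {..<N} \<subseteq> {..<N}" using assms by auto
  qed (use inj in simp_all)
  have "(\<Sum>m<N. f ((m + a) mod N)) = sum f ((\<lambda>m. (m + a) mod N) ` {..<N})"
    using sum.reindex[OF inj, of f] by simp
  then show ?thesis using img by simp
qed

definition hhN :: "nat \<Rightarrow> nat \<Rightarrow> real" where
  "hhN N k = (-1) ^ k * (rhoN N ^ k - rhoN N ^ (N - k))"

lemma Delta_facts:
  assumes "N \<ge> 5"
  shows "DeltaN N > 0" "DeltaN N ^ 2 = real N * (real N - 4)"
proof -
  have "real N * (real N - 4) > 0" using assms by simp
  then show "DeltaN N > 0" "DeltaN N ^ 2 = real N * (real N - 4)"
    unfolding DeltaN_def by auto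
qed

lemma rho_facts:
  assumes "N \<ge> 5"
  shows "rhoN N > 1" "rhoN N * rhoN N = (real N - 2) * rhoN N - 1"
    "DeltaN N * rhoN N = rhoN N * rhoN N - 1"
proof -
  note D = Delta_facts[OF assms]
  have N: "real N \<ge> 5" using assms by simp
  show "rhoN N > 1" unfolding rhoN_def using D N by simp
  define d where "d = DeltaN N"
  define c where "c = real N - 2"
  have dd: "d * d = c * c - 4" unfolding d_def c_def using D(2) by (simp add: power2_eq_square algebra_simps)
  have r: "rhoN N = (c + d) / 2" unfolding rhoN_def c_def d_def by simp
  have "(c + d) / 2 * ((c + d) / 2) = c * ((c + d) / 2) - 1"
  proof -
    have "(c + d) / 2 * ((c + d) / 2) = (c * c + 2 * c * d + d * d) / 4" by (simp add: algebra_simps)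
    also have "\<dots> = (2 * c * c + 2 * c * d - 4) / 4" unfolding dd by simp
    also have "\<dots> = c * ((c + d) / 2) - 1" by (simp add: field_simps)
    finally show ?thesis .
  qed
  then show "rhoN N * rhoN N = (real N - 2) * rhoN N - 1" unfolding r c_def .
  have "(c + d) / 2 * ((c + d) / 2) - 1 - d * ((c + d) / 2) = (c * c - 4 - d * d) / 4"
    by (simp add: field_simps)
  then have "d * ((c + d) / 2) = (c + d) / 2 * ((c + d) / 2) - 1" using dd by simp
  then show "DeltaN N * rhoN N = rhoN N * rhoN N - 1" unfolding r d_def .
qed

lemma hh_sym:
  assumes "k \<le> N" "odd N"
  shows "hhN N (N - k) = hhN N k"
proof -
  obtain t where t: "N = k + t" using assms by (intro that[of "N - k"]) simp
  have "odd (k + t)" using assms t by simp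
  then have "(-1::real) ^ t = - ((-1) ^ k)"
    by (cases "even k") auto
  then show ?thesis unfolding hhN_def t by (simp add: algebra_simps)
qed

lemma hh_rec:
  assumes "N \<ge> 5" "1 \<le> m" "m + 1 \<le> N"
  shows "(real N - 2) * hhN N m + hhN N (m + 1) + hhN N (m - 1) = 0"
proof -
  obtain j where j: "m = j + 1" using assms by (intro that[of "m - 1"]) simp
  obtain t where t: "N = j + 2 + t" using assms j by (intro that[of "N - j - 2"]) simp
  define r where "r = rhoN N"
  define c where "c = real N - 2"
  have key: "r * r = c * r - 1" unfolding r_def c_def using rho_facts[OF assms(1)] by simp
  have e1: "N - Suc j = t + 1" "N - Suc (Suc j) = t" "N - j = t + 2" "m - 1 = j" using j t by auto
  have "c * hhN N m + hhN N (m + 1) + hhN N (m - 1) =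
     (-1)^j * (r^j - r^t) * (r * r - c * r + 1)"
    unfolding hhN_def j r_def[symmetric]
    by (simp add: e1 algebra_simps power_add power2_eq_square)
  also have "\<dots> = 0" using key by simp
  finally show ?thesis unfolding c_def .
qed

lemma hh_0:
  assumes "N \<ge> 5" "odd N"
  shows "(real N - 2) * hhN N 0 + hhN N 1 + hhN N (N - 1) = - DeltaN N * (1 + rhoN N ^ N)"
proof -
  define s where "s = N - 1"
  have Ns: "N = Suc s" unfolding s_def using assms by simp
  have es: "even s" using assms Ns by simp
  define r where "r = rhoN N"
  define c where "c = real N - 2"
  define P where "P = r ^ s"
  have key: "r * r = c * r - 1" unfolding r_def c_def using rho_facts[OF assms(1)] by simp
  have kc: "c * r = 1 + r * r" using key by simp
  have key2: "DeltaN N * r = r * r - 1" unfolding r_def using rho_facts[OF assms(1)] by simp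
  have rpos: "r > 0" unfolding r_def using rho_facts[OF assms(1)] by simp
  have rN: "r ^ N = P * r" unfolding P_def Ns by simp
  have m1: "(-1::real) ^ s = 1" using es by simp
  have h0: "hhN N 0 = 1 - P * r" unfolding hhN_def r_def[symmetric] using rN by simp
  have h1: "hhN N 1 = P - r" unfolding hhN_def r_def[symmetric] P_def s_def by simp
  have "N - (N - 1) = 1" using assms by simp
  then have h2: "hhN N (N - 1) = P - r" unfolding hhN_def r_def[symmetric] P_def s_def[symmetric] using m1 by simp
  have "(c * (1 - P * r) + (P - r) + (P - r)) * r = (- DeltaN N * (1 + P * r)) * r"
  proof -
    have "(c * (1 - P * r) + (P - r) + (P - r)) * r = c * r - P * r * (c * r) - 2 * (r * r) + 2 * P * r"
      by (simp add: algebra_simps)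
    also have "\<dots> = (1 - r * r) * (1 + P * r)" unfolding kc
      by (simp add: algebra_simps)
    also have "\<dots> = (- (DeltaN N * r)) * (1 + P * r)" using key2 by simp
    also have "\<dots> = (- DeltaN N * (1 + P * r)) * r" by (simp add: algebra_simps)
    finally show ?thesis .
  qed
  then have "c * (1 - P * r) + (P - r) + (P - r) = - DeltaN N * (1 + P * r)"
    using rpos by (simp only: mult_right_cancel[of r] less_irrefl)
  then show ?thesis unfolding h0 h1 h2 c_def[symmetric] r_def[symmetric] rN .
qed

definition g0N :: "nat \<Rightarrow> nat \<Rightarrow> real" where
  "g0N N m = - hhN N m / (DeltaN N * (1 + rhoN N ^ N))"

definition ggN :: "nat \<Rightarrow> nat \<Rightarrow> real" where
  "ggN N m = g0N N m - 1 / (real N)^2"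

lemma mod_suc_cases: "i < (N::nat) \<Longrightarrow> (i + 1) mod N = (if i + 1 = N then 0 else i + 1)"
  by (cases "i + 1 = N") auto

lemma mod_pred_cases: "i < (N::nat) \<Longrightarrow> (i + N - 1) mod N = (if i = 0 then N - 1 else i - 1)"
proof -
  assume "i < N"
  show ?thesis
  proof (cases "i = 0")
    case True
    have "N - 1 < N" using \<open>i < N\<close> by simp
    then show ?thesis using True by simp
  next
    case False
    have "i + N - 1 = (i - 1) + N" using False by simp
    then have "(i + N - 1) mod N = ((i - 1) + N) mod N" by simp
    also have "\<dots> = (i - 1) mod N" by (rule mod_add_self2)
    also have "\<dots> = i - 1" using \<open>i < N\<close> by simp
    finally show ?thesis using False by simp
  qed
qed

lemma K_pos: "N \<ge> 5 \<Longrightarrow> DeltaN N * (1 + rhoN N ^ N) > 0"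
  using Delta_facts(1) rho_facts(1) by (smt (verit) mult_pos_pos zero_less_power)

lemma g0_rec:
  assumes "N \<ge> 5" "odd N" "m < N"
  shows "(real N - 2) * g0N N m + g0N N ((m + 1) mod N) + g0N N ((m + N - 1) mod N)
     = (if m = 0 then 1 else 0)"
proof -
  define K where "K = DeltaN N * (1 + rhoN N ^ N)"
  have K: "K > 0" unfolding K_def using K_pos assms by simp
  have "(real N - 2) * g0N N m + g0N N ((m + 1) mod N) + g0N N ((m + N - 1) mod N)
     = - ((real N - 2) * hhN N m + hhN N ((m + 1) mod N) + hhN N ((m + N - 1) mod N)) / K"
    unfolding g0N_def K_def[symmetric] using K by (simp add: field_simps)
  also have "\<dots> = (if m = 0 then 1 else 0)"
  proof (cases "m = 0")
    case True
    have "(real N - 2) * hhN N 0 + hhN N 1 + hhN N (N - 1) = - K"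
      using hh_0[OF assms(1,2)] unfolding K_def by simp
    then show ?thesis using True K assms by simp
  next
    case False
    have hN: "hhN N N = hhN N 0" using hh_sym[of N N] assms by simp
    have a: "hhN N ((m + 1) mod N) = hhN N (m + 1)"
      using mod_suc_cases[OF assms(3)] hN by auto
    have b: "(m + N - 1) mod N = m - 1" using mod_pred_cases[OF assms(3)] False by simp
    show ?thesis using hh_rec[OF assms(1), of m] False assms(3) a b by simp
  qed
  finally show ?thesis .
qed

lemma g0_sum:
  assumes "N \<ge> 5" "odd N"
  shows "(\<Sum>m<N. g0N N m) = 1 / real N"
proof -
  have "(\<Sum>m<N. (real N - 2) * g0N N m + g0N N ((m + 1) mod N) + g0N N ((m + N - 1) mod N))
      = (\<Sum>m<N. (if m = 0 then 1 else 0 :: real))"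
    using g0_rec[OF assms] by (intro sum.cong) auto
  also have "\<dots> = 1" using assms by simp
  finally have "(real N - 2) * (\<Sum>m<N. g0N N m) + (\<Sum>m<N. g0N N ((m + 1) mod N))
      + (\<Sum>m<N. g0N N ((m + (N - 1)) mod N)) = 1"
    using assms by (simp add: sum.distrib sum_distrib_left)
  moreover have s1: "(\<Sum>m<N. g0N N ((m + 1) mod N)) = (\<Sum>m<N. g0N N m)"
    using sum_shift_mod[of N "g0N N" 1] assms by simp
  moreover have s2: "(\<Sum>m<N. g0N N ((m + (N - 1)) mod N)) = (\<Sum>m<N. g0N N m)"
    using sum_shift_mod[of N "g0N N" "N - 1"] assms by simp
  moreover have "real N * (\<Sum>m<N. g0N N m) = (real N - 2) * (\<Sum>m<N. g0N N m) + (\<Sum>m<N. g0N N m) + (\<Sum>m<N. g0N N m)"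
    by (simp add: algebra_simps)
  ultimately have "real N * (\<Sum>m<N. g0N N m) = 1" by linarith
  then show ?thesis using assms by (simp add: field_simps)
qed

lemma gg_sum:
  assumes "N \<ge> 5" "odd N"
  shows "(\<Sum>m<N. ggN N m) = 0"
proof -
  have "(\<Sum>m<N. ggN N m) = (\<Sum>m<N. g0N N m) - real N * (1 / (real N)^2)"
    unfolding ggN_def by (simp add: sum_subtractf)
  also have "\<dots> = 0" using g0_sum[OF assms] assms by (simp add: power2_eq_square)
  finally show ?thesis .
qed

lemma gg_rec:
  assumes "N \<ge> 5" "odd N" "m < N"
  shows "(real N - 2) * ggN N m + ggN N ((m + 1) mod N) + ggN N ((m + N - 1) mod N)
     = (if m = 0 then 1 else 0) - 1 / real N"
proof -
  have "(real N - 2) * ggN N m + ggN N ((m + 1) mod N) + ggN N ((m + N - 1) mod N)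
    = ((real N - 2) * g0N N m + g0N N ((m + 1) mod N) + g0N N ((m + N - 1) mod N)) - real N * (1 / (real N)^2)"
  proof -
    have gen: "\<And>a b d c. (real N - 2) * (a - c) + (b - c) + (d - c) = ((real N - 2) * a + b + d) - real N * c"
      by (simp add: algebra_simps)
    show ?thesis unfolding ggN_def by (rule gen)
  qed
  also have "real N * (1 / (real N)^2) = 1 / real N" by (simp add: power2_eq_square)
  finally show ?thesis using g0_rec[OF assms] by simp
qed

lemma gg_sym:
  assumes "odd N" "k \<le> N"
  shows "ggN N (N - k) = ggN N k"
  using hh_sym[OF assms(2,1)] unfolding ggN_def g0N_def by simp




definition cycN :: "nat \<Rightarrow> nat \<Rightarrow> nat \<Rightarrow> real" where
  "cycN N i k = (if k = i then 2 else 0) - (if k = (i + 1) mod N then 1 else 0)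
      - (if k = (i + N - 1) mod N then 1 else 0)"

lemma zmod_small:
  fixes z :: int
  assumes "- int N < z" "z < int N"
  shows "z mod int N = (if 0 \<le> z then z else z + int N)"
proof (cases "0 \<le> z")
  case True then show ?thesis using assms by simp
next
  case False
  have "z mod int N = (z + int N) mod int N" by simp
  also have "\<dots> = z + int N" using assms False by (intro mod_pos_pos_trivial) auto
  finally show ?thesis using False by simp
qed

lemma adj_char:
  assumes "N \<ge> 3" "i < N" "k < N"
  shows "adjN N i k \<longleftrightarrow> k \<noteq> i \<and> k \<noteq> (i + 1) mod N \<and> k \<noteq> (i + N - 1) mod N"
proof -
  have z: "(int k - int i) mod int N = (if 0 \<le> int k - int i then int k - int i else int k - int i + int N)"
    using assms by (intro zmod_small) auto
  show ?thesis unfolding adjN_def z mod_suc_cases[OF assms(2)] mod_pred_cases[OF assms(2)]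
    using assms by auto
qed

lemma three_distinct:
  fixes N i :: nat
  assumes "N \<ge> 3" "i < N"
  shows "i \<noteq> (i + 1) mod N" "i \<noteq> (i + N - 1) mod N" "(i + 1) mod N \<noteq> (i + N - 1) mod N"
  unfolding mod_suc_cases[OF assms(2)] mod_pred_cases[OF assms(2)] using assms by auto

lemma deg_eq:
  assumes "N \<ge> 3" "i < N"
  shows "degN N i = N - 3"
proof -
  have "{j. j < N \<and> adjN N i j} = {..<N} - {i, (i + 1) mod N, (i + N - 1) mod N}"
    using adj_char[OF assms(1,2)] by auto
  moreover have "card {i, (i + 1) mod N, (i + N - 1) mod N} = 3"
    using three_distinct[OF assms] by simp
  moreover have "{i, (i + 1) mod N, (i + N - 1) mod N} \<subseteq> {..<N}"
    using assms by auto
  ultimately show ?thesis unfolding degN_def by (simp add: card_Diff_subset)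
qed

lemma L_entry:
  assumes "N \<ge> 3" "i < N" "k < N"
  shows "laplacianN N $$ (i, k) = (if i = k then real N else 0) - 1 - cycN N i k"
proof -
  note d = three_distinct[OF assms(1,2)]
  have e: "laplacianN N $$ (i, k) = (if i = k then real (degN N i) else if adjN N i k then -1 else 0)"
    unfolding laplacianN_def using assms by simp
  show ?thesis
  proof (cases "i = k")
    case True
    have "cycN N i k = 2" unfolding cycN_def using True d by auto
    moreover have "real (degN N i) = real N - 3" using deg_eq[OF assms(1,2)] assms(1) by (simp add: of_nat_diff)
    ultimately show ?thesis using e True by simp
  next
    case False
    show ?thesis
    proof (cases "adjN N i k")
      case True
      then have "k \<noteq> (i + 1) mod N" "k \<noteq> (i + N - 1) mod N" using adj_char[OF assms] by auto
      then have "cycN N i k = 0" unfolding cycN_def using False by auto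
      then show ?thesis using e False True by simp
    next
      case na: False
      then have "k = (i + 1) mod N \<or> k = (i + N - 1) mod N" using adj_char[OF assms] False by auto
      then have "cycN N i k = -1" unfolding cycN_def using False d by auto
      then show ?thesis using e False na by simp
    qed
  qed
qed

lemma L_carrier: "laplacianN N \<in> carrier_mat N N"
  unfolding laplacianN_def by simp

lemma L_rowsum:
  fixes f :: "nat \<Rightarrow> real"
  assumes "N \<ge> 3" "i < N"
  shows "(\<Sum>k<N. laplacianN N $$ (i, k) * f k) =
     (real N - 2) * f i - (\<Sum>k<N. f k) + f ((i + 1) mod N) + f ((i + N - 1) mod N)"
proof -
  have a: "(i + 1) mod N < N" "(i + N - 1) mod N < N" using assms by auto
  have "(\<Sum>k<N. laplacianN N $$ (i, k) * f k) =
     (\<Sum>k<N. (if k = i then real N * f k else 0) - f k - (if k = i then 2 * f k else 0)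
        + (if k = (i + 1) mod N then f k else 0) + (if k = (i + N - 1) mod N then f k else 0))"
    by (intro sum.cong refl) (auto simp: L_entry assms cycN_def algebra_simps)
  also have "\<dots> = real N * f i - (\<Sum>k<N. f k) - 2 * f i + f ((i + 1) mod N) + f ((i + N - 1) mod N)"
    using assms a by (simp add: sum.distrib sum_subtractf)
  finally show ?thesis by (simp add: algebra_simps)
qed

lemma succ_pred:
  fixes N i k :: nat
  assumes "i < N" "k < N"
  shows "k = (i + 1) mod N \<longleftrightarrow> i = (k + N - 1) mod N"
  unfolding mod_suc_cases[OF assms(1)] mod_pred_cases[OF assms(2)] using assms by auto

lemma cyc_sym:
  assumes "N \<ge> 3" "i < N" "k < N"
  shows "cycN N i k = cycN N k i"
proof -
  have 1: "(k = (i + 1) mod N) = (i = (k + N - 1) mod N)" using succ_pred assms by blast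
  have 2: "(k = (i + N - 1) mod N) = (i = (k + 1) mod N)" using succ_pred[of k N i] assms by auto
  show ?thesis unfolding cycN_def 1 2 by auto
qed

lemma L_sym:
  assumes "N \<ge> 3" "i < N" "k < N"
  shows "laplacianN N $$ (i, k) = laplacianN N $$ (k, i)"
  using L_entry[OF assms] L_entry[OF assms(1,3,2)] cyc_sym[OF assms] by auto




definition XN :: "nat \<Rightarrow> real mat" where
  "XN N = mat N N (\<lambda>(i, j). ggN N ((i + N - j) mod N))"

definition PN :: "nat \<Rightarrow> real mat" where
  "PN N = mat N N (\<lambda>(i, j). (if i = j then 1 else 0) - 1 / real N)"

lemma L_dims[simp]: "dim_row (laplacianN N) = N" "dim_col (laplacianN N) = N"
  unfolding laplacianN_def by simp_all

lemma idx_form: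
  fixes N i j :: nat
  assumes "i < N" "j < N"
  shows "(i + N - j) mod N = (if j \<le> i then i - j else i + N - j)"
proof (cases "j \<le> i")
  case True
  then have "i + N - j = (i - j) + N" by simp
  then have "(i + N - j) mod N = ((i - j) + N) mod N" by simp
  also have "\<dots> = (i - j) mod N" by (rule mod_add_self2)
  also have "\<dots> = i - j" using assms by simp
  finally show ?thesis using True by simp
next
  case False then show ?thesis using assms by simp
qed

lemma idx1:
  fixes N i j :: nat
  assumes "i < N" "j < N"
  shows "((i + 1) mod N + N - j) mod N = ((i + N - j) mod N + 1) mod N"
proof -
  have "(i + 1) mod N + N - j = (i + 1) mod N + (N - j)" using assms by simp
  then have "((i + 1) mod N + N - j) mod N = (i + 1 + (N - j)) mod N" by (simp only: mod_add_left_eq)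
  moreover have "((i + N - j) mod N + 1) mod N = (i + N - j + 1) mod N" by (rule mod_add_left_eq)
  moreover have "i + 1 + (N - j) = i + N - j + 1" using assms by simp
  ultimately show ?thesis by simp
qed

lemma idx2:
  fixes N i j :: nat
  assumes "i < N" "j < N"
  shows "((i + N - 1) mod N + N - j) mod N = ((i + N - j) mod N + N - 1) mod N"
proof -
  have "(i + N - 1) mod N + N - j = (i + N - 1) mod N + (N - j)" using assms by simp
  then have "((i + N - 1) mod N + N - j) mod N = (i + N - 1 + (N - j)) mod N" by (simp only: mod_add_left_eq)
  moreover have "(i + N - j) mod N + N - 1 = (i + N - j) mod N + (N - 1)" using assms by simp
  then have "((i + N - j) mod N + N - 1) mod N = (i + N - j + (N - 1)) mod N" by (simp only: mod_add_left_eq)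
  moreover have "i + N - 1 + (N - j) = i + N - j + (N - 1)" using assms by simp
  ultimately show ?thesis by simp
qed

lemma sum_col_gg:
  assumes "N \<ge> 5" "odd N" "j < N"
  shows "(\<Sum>k<N. ggN N ((k + N - j) mod N)) = 0"
proof -
  have "(\<Sum>k<N. ggN N ((k + N - j) mod N)) = (\<Sum>k<N. ggN N ((k + (N - j)) mod N))"
    using assms by (intro sum.cong refl) (simp add: add_diff_assoc)
  also have "\<dots> = (\<Sum>k<N. ggN N k)" using sum_shift_mod[of N "ggN N" "N - j"] assms by simp
  also have "\<dots> = 0" using gg_sum[OF assms(1,2)] .
  finally show ?thesis .
qed

lemma LX:
  assumes "N \<ge> 5" "odd N"
  shows "laplacianN N * XN N = PN N"
proof (rule eq_matI)
  show "dim_row (laplacianN N * XN N) = dim_row (PN N)" "dim_col (laplacianN N * XN N) = dim_col (PN N)"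
    unfolding laplacianN_def XN_def PN_def by simp_all
  fix i j assume "i < dim_row (PN N)" "j < dim_col (PN N)"
  then have ij: "i < N" "j < N" unfolding PN_def by simp_all
  have N3: "N \<ge> 3" using assms by simp
  define m where "m = (i + N - j) mod N"
  have mN: "m < N" unfolding m_def using ij by simp
  have m0: "m = 0 \<longleftrightarrow> i = j" unfolding m_def idx_form[OF ij] using ij by auto
  have "(laplacianN N * XN N) $$ (i, j) = (\<Sum>k<N. laplacianN N $$ (i, k) * ggN N ((k + N - j) mod N))"
  proof -
    have "(laplacianN N * XN N) $$ (i, j) = row (laplacianN N) i \<bullet> col (XN N) j"
      using ij by (simp add: XN_def)
    also have "\<dots> = (\<Sum>k\<in>{0..<N}. row (laplacianN N) i $ k * col (XN N) j $ k)"
      unfolding scalar_prod_def by (simp add: XN_def)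
    also have "\<dots> = (\<Sum>k<N. laplacianN N $$ (i, k) * ggN N ((k + N - j) mod N))"
      unfolding atLeast0LessThan using ij by (intro sum.cong refl) (simp add: XN_def)
    finally show ?thesis .
  qed
  also have "\<dots> = (real N - 2) * ggN N m - 0 + ggN N ((m + 1) mod N) + ggN N ((m + N - 1) mod N)"
    unfolding L_rowsum[OF N3 ij(1)] sum_col_gg[OF assms ij(2)] m_def idx1[OF ij] idx2[OF ij] by simp
  also have "\<dots> = (if i = j then 1 else 0) - 1 / real N" using gg_rec[OF assms mN] m0 by simp
  also have "\<dots> = PN N $$ (i, j)" unfolding PN_def using ij by simp
  finally show "(laplacianN N * XN N) $$ (i, j) = PN N $$ (i, j)" .
qed




lemma pinv_unique_sq:
  fixes A X :: "real mat"
  assumes A: "A \<in> carrier_mat n n" and X: "X \<in> carrier_mat n n"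
    and e1: "A * X * A = A" and e2: "X * A * X = X"
    and e3: "transpose_mat (A * X) = A * X" and e4: "transpose_mat (X * A) = X * A"
  shows "pinv A = X"
  unfolding pinv_def
proof (rule the_equality)
  show "X \<in> carrier_mat (dim_col A) (dim_row A) \<and> A * X * A = A \<and> X * A * X = X \<and>
    transpose_mat (A * X) = A * X \<and> transpose_mat (X * A) = X * A" using assms by auto
next
  fix Y assume "Y \<in> carrier_mat (dim_col A) (dim_row A) \<and> A * Y * A = A \<and> Y * A * Y = Y \<and>
    transpose_mat (A * Y) = A * Y \<and> transpose_mat (Y * A) = Y * A"
  then have Y: "Y \<in> carrier_mat n n" and f1: "A * Y * A = A" and f2: "Y * A * Y = Y"
    and f3: "transpose_mat (A * Y) = A * Y" and f4: "transpose_mat (Y * A) = Y * A"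
    using A by auto
  have AX: "A * X \<in> carrier_mat n n" and AY: "A * Y \<in> carrier_mat n n"
    and XA: "X * A \<in> carrier_mat n n" and YA: "Y * A \<in> carrier_mat n n" using A X Y by auto
  have "A * X = (A * Y * A) * X" using f1 by simp
  also have "\<dots> = (A * Y) * (A * X)" using A X Y by (simp add: assoc_mult_mat[of _ n n _ n _ n])
  also have "\<dots> = transpose_mat (A * Y) * transpose_mat (A * X)" using e3 f3 by simp
  also have "\<dots> = transpose_mat ((A * X) * (A * Y))" using AX AY by (simp add: transpose_mult[of _ n n])
  also have "(A * X) * (A * Y) = (A * X * A) * Y" using A X Y by (simp add: assoc_mult_mat[of _ n n _ n _ n])
  also have "\<dots> = A * Y" using e1 by simp
  finally have 1: "A * X = A * Y" using f3 by simp
  have "X * A = X * (A * Y * A)" using f1 by simp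
  also have "\<dots> = (X * A) * (Y * A)" using A X Y by (simp add: assoc_mult_mat[of _ n n _ n _ n])
  also have "\<dots> = transpose_mat (X * A) * transpose_mat (Y * A)" using e4 f4 by simp
  also have "\<dots> = transpose_mat ((Y * A) * (X * A))" using XA YA by (simp add: transpose_mult[of _ n n])
  also have "(Y * A) * (X * A) = Y * (A * X * A)" using A X Y by (simp add: assoc_mult_mat[of _ n n _ n _ n])
  also have "\<dots> = Y * A" using e1 by simp
  finally have 2: "X * A = Y * A" using f4 by simp
  have "Y = Y * A * Y" using f2 by simp
  also have "\<dots> = X * A * Y" using 2 by simp
  also have "\<dots> = X * (A * Y)" using A X Y by (simp add: assoc_mult_mat[of _ n n _ n _ n])
  also have "\<dots> = X * (A * X)" using 1 by simp
  also have "\<dots> = X" using e2 A X by (simp add: assoc_mult_mat[of _ n n _ n _ n])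
  finally show "Y = X" by simp
qed


lemma X_carrier: "XN N \<in> carrier_mat N N" unfolding XN_def by simp
lemma P_carrier: "PN N \<in> carrier_mat N N" unfolding PN_def by simp

lemma X_sym:
  assumes "odd N" "N \<ge> 5"
  shows "transpose_mat (XN N) = XN N"
proof (rule eq_matI)
  fix i j assume "i < dim_row (XN N)" "j < dim_col (XN N)"
  then have ij: "i < N" "j < N" unfolding XN_def by simp_all
  show "transpose_mat (XN N) $$ (i, j) = XN N $$ (i, j)"
  proof (cases "i = j")
    case True then show ?thesis using ij unfolding XN_def by simp
  next
    case False
    have "(j + N - i) mod N = N - (i + N - j) mod N"
      unfolding idx_form[OF ij] idx_form[OF ij(2,1)] using False ij by auto
    moreover have "(i + N - j) mod N \<le> N" using ij by simp
    ultimately have "ggN N ((j + N - i) mod N) = ggN N ((i + N - j) mod N)"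
      using gg_sym[OF assms(1)] by simp
    then show ?thesis using ij unfolding XN_def by simp
  qed
qed (simp_all add: XN_def)

lemma L_symm:
  assumes "N \<ge> 5"
  shows "transpose_mat (laplacianN N) = laplacianN N"
proof (rule eq_matI)
  fix i j assume "i < dim_row (laplacianN N)" "j < dim_col (laplacianN N)"
  then have ij: "i < N" "j < N" by simp_all
  show "transpose_mat (laplacianN N) $$ (i, j) = laplacianN N $$ (i, j)"
    using ij L_sym[of N j i] assms by simp
qed simp_all

lemma P_symm: "transpose_mat (PN N) = PN N"
  by (rule eq_matI) (auto simp: PN_def)

lemma XL:
  assumes "N \<ge> 5" "odd N"
  shows "XN N * laplacianN N = PN N"
proof -
  have "transpose_mat (laplacianN N * XN N) = transpose_mat (XN N) * transpose_mat (laplacianN N)"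
    using L_carrier X_carrier by (rule transpose_mult)
  then show ?thesis using LX[OF assms] X_sym[OF assms(2,1)] L_symm[OF assms(1)] P_symm by simp
qed

lemma P_mult_sum:
  fixes a :: "nat \<Rightarrow> real"
  assumes "i < N"
  shows "(\<Sum>k<N. ((if i = k then 1 else 0) - 1 / real N) * a k) = a i - (\<Sum>k<N. a k) / real N"
proof -
  have "(\<Sum>k<N. ((if i = k then 1 else 0) - 1 / real N) * a k)
      = (\<Sum>k<N. (if k = i then a k else 0) - a k / real N)"
    by (intro sum.cong refl) (auto simp: algebra_simps)
  also have "\<dots> = (\<Sum>k<N. (if k = i then a k else 0)) - (\<Sum>k<N. a k / real N)"
    by (rule sum_subtractf)
  also have "\<dots> = a i - (\<Sum>k<N. a k) / real N" using assms by (simp add: sum_divide_distrib)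
  finally show ?thesis .
qed

lemma P_mult_entry:
  assumes "A \<in> carrier_mat N N" "i < N" "j < N"
  shows "(PN N * A) $$ (i, j) = A $$ (i, j) - (\<Sum>k<N. A $$ (k, j)) / real N"
proof -
  have "(PN N * A) $$ (i, j) = row (PN N) i \<bullet> col A j"
    using assms by (simp add: PN_def)
  also have "\<dots> = (\<Sum>k\<in>{0..<N}. row (PN N) i $ k * col A j $ k)"
    using assms unfolding scalar_prod_def by simp
  also have "\<dots> = (\<Sum>k<N. ((if i = k then 1 else 0) - 1 / real N) * A $$ (k, j))"
    unfolding atLeast0LessThan using assms by (intro sum.cong refl) (simp add: PN_def)
  also have "\<dots> = A $$ (i, j) - (\<Sum>k<N. A $$ (k, j)) / real N" by (rule P_mult_sum[OF assms(2)])
  finally show ?thesis .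
qed

lemma PL:
  assumes "N \<ge> 5"
  shows "PN N * laplacianN N = laplacianN N"
proof (rule eq_matI)
  fix i j assume "i < dim_row (laplacianN N)" "j < dim_col (laplacianN N)"
  then have ij: "i < N" "j < N" by simp_all
  have N3: "N \<ge> 3" using assms by simp
  have "(\<Sum>k<N. laplacianN N $$ (k, j)) = (\<Sum>k<N. laplacianN N $$ (j, k) * 1)"
    using L_sym[OF N3 _ ij(2)] by (intro sum.cong refl) simp
  also have "\<dots> = 0" using L_rowsum[OF N3 ij(2), of "\<lambda>_. 1"] by simp
  finally show "(PN N * laplacianN N) $$ (i, j) = laplacianN N $$ (i, j)"
    using P_mult_entry[OF L_carrier ij] by simp
qed (simp_all add: PN_def)

lemma PX:
  assumes "N \<ge> 5" "odd N"
  shows "PN N * XN N = XN N"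
proof (rule eq_matI)
  fix i j assume "i < dim_row (XN N)" "j < dim_col (XN N)"
  then have ij: "i < N" "j < N" by (simp_all add: XN_def)
  have "(\<Sum>k<N. XN N $$ (k, j)) = (\<Sum>k<N. ggN N ((k + N - j) mod N))"
    using ij by (intro sum.cong refl) (simp add: XN_def)
  also have "\<dots> = 0" using sum_col_gg[OF assms ij(2)] .
  finally show "(PN N * XN N) $$ (i, j) = XN N $$ (i, j)"
    using P_mult_entry[OF X_carrier ij] by simp
qed (simp_all add: PN_def XN_def)

lemma pinv_L:
  assumes "N \<ge> 5" "odd N"
  shows "pinv (laplacianN N) = XN N"
proof (rule pinv_unique_sq[OF L_carrier X_carrier])
  show "laplacianN N * XN N * laplacianN N = laplacianN N" using LX[OF assms] PL[OF assms(1)] by simp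
  show "XN N * laplacianN N * XN N = XN N" using XL[OF assms] PX[OF assms] by simp
  show "transpose_mat (laplacianN N * XN N) = laplacianN N * XN N" using LX[OF assms] P_symm by simp
  show "transpose_mat (XN N * laplacianN N) = XN N * laplacianN N" using XL[OF assms] P_symm by simp
qed

lemma eff_res_X:
  assumes "N \<ge> 5" "odd N" "u < N" "v < N"
  shows "eff_res N u v = XN N $$ (u, u) - XN N $$ (u, v) - XN N $$ (v, u) + XN N $$ (v, v)"
proof -
  define x :: "real vec" where "x = unit_vec N u - unit_vec N v"
  have xc: "x \<in> carrier_vec N" unfolding x_def by simp
  define w where "w = XN N *\<^sub>v x"
  have wc: "w \<in> carrier_vec N" unfolding w_def using X_carrier[of N] xc by simp
  have "x \<bullet> w = unit_vec N u \<bullet> w - unit_vec N v \<bullet> w"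
    unfolding x_def by (rule minus_scalar_prod_distrib[OF _ _ wc]) simp_all
  also have "\<dots> = w $ u - w $ v" using wc assms by simp
  also have "w $ u = XN N $$ (u, u) - XN N $$ (u, v)"
  proof -
    have rc: "row (XN N) u \<in> carrier_vec N" by (simp add: XN_def row_def)
    have "w $ u = row (XN N) u \<bullet> x" unfolding w_def using assms by (simp add: XN_def)
    also have "\<dots> = row (XN N) u \<bullet> unit_vec N u - row (XN N) u \<bullet> unit_vec N v"
      unfolding x_def by (rule scalar_prod_minus_distrib[OF rc]) simp_all
    also have "\<dots> = XN N $$ (u, u) - XN N $$ (u, v)" using assms by (simp add: XN_def)
    finally show ?thesis .
  qed
  also have "w $ v = XN N $$ (v, u) - XN N $$ (v, v)"
  proof -
    have rc: "row (XN N) v \<in> carrier_vec N" by (simp add: XN_def row_def)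
    have "w $ v = row (XN N) v \<bullet> x" unfolding w_def using assms by (simp add: XN_def)
    also have "\<dots> = row (XN N) v \<bullet> unit_vec N u - row (XN N) v \<bullet> unit_vec N v"
      unfolding x_def by (rule scalar_prod_minus_distrib[OF rc]) simp_all
    also have "\<dots> = XN N $$ (v, u) - XN N $$ (v, v)" using assms by (simp add: XN_def)
    finally show ?thesis .
  qed
  finally have "x \<bullet> w = XN N $$ (u, u) - XN N $$ (u, v) - (XN N $$ (v, u) - XN N $$ (v, v))" .
  then show ?thesis unfolding eff_res_def Let_def pinv_L[OF assms(1,2)] x_def[symmetric] w_def[symmetric]
    by simp
qed




lemma resist_hh: "resist_formula N q = 2 / (DeltaN N * (rhoN N ^ N + 1)) * (rhoN N ^ N - 1 + hhN N q)"
  unfolding resist_formula_def hhN_def by simp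

lemma alg_aux: "2 * ((b - (1 - a)) / (K::real)) = 2 / K * (a - 1 + b)"
  by (simp add: algebra_simps diff_divide_distrib add_divide_distrib)

lemma pow_diff_bound:
  assumes "N \<ge> 5" "0 < a" "a \<le> N" "0 < b"
  shows "rhoN N ^ a - rhoN N ^ b < rhoN N ^ N - 1"
proof -
  have r: "rhoN N > 1" using rho_facts(1)[OF assms(1)] .
  have "rhoN N ^ a \<le> rhoN N ^ N" using r assms by (intro power_increasing) auto
  moreover have "1 < rhoN N ^ b" using r assms by (intro one_less_power) auto
  ultimately show ?thesis by linarith
qed

lemma num_pos:
  assumes "N \<ge> 5" "0 < q" "q < N"
  shows "rhoN N ^ N - 1 + hhN N q > 0"
proof (cases "even q")
  case True
  have "rhoN N ^ (N - q) - rhoN N ^ q < rhoN N ^ N - 1" using assms by (intro pow_diff_bound) auto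
  then show ?thesis unfolding hhN_def using True by simp
next
  case False
  have "rhoN N ^ q - rhoN N ^ (N - q) < rhoN N ^ N - 1" using assms by (intro pow_diff_bound) auto
  then show ?thesis unfolding hhN_def using False by simp
qed

theorem theorem4p1:
  fixes N u v :: nat
  assumes "N \<ge> 5" and "odd N" and "u < N" and "v < N"
  defines "q \<equiv> (v + N - u) mod N"
  shows "eff_res N u v = resist_formula N q \<and>
         (\<forall>p<N. resist_formula N p = resist_formula N (N - p)) \<and>
         eff_res N u v = resist_formula N (min q (N - q)) \<and>
         (u \<noteq> v \<longrightarrow> eff_res N u v > 0)"
proof -
  have N0: "N > 0" using assms by simp
  have qN: "q < N" unfolding q_def using N0 by simp
  have sym: "\<forall>p<N. resist_formula N p = resist_formula N (N - p)"
  proof (intro allI impI)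
    fix p assume "p < N"
    then have "hhN N (N - p) = hhN N p" using hh_sym[of p N] assms(2) by simp
    then show "resist_formula N p = resist_formula N (N - p)" unfolding resist_hh by simp
  qed
  have Xuu: "XN N $$ (u, u) = ggN N 0" "XN N $$ (v, v) = ggN N 0"
    using assms(3,4) unfolding XN_def by simp_all
  have Xvu: "XN N $$ (v, u) = ggN N q" using assms(3,4) unfolding XN_def q_def by simp
  have Xuv: "XN N $$ (u, v) = ggN N q"
  proof (cases "u = v")
    case True then show ?thesis using Xuu Xvu by simp
  next
    case False
    have "(u + N - v) mod N = N - q"
      unfolding q_def idx_form[OF assms(3,4)] idx_form[OF assms(4,3)] using False assms(3,4) by auto
    then have "XN N $$ (u, v) = ggN N (N - q)" using assms(3,4) unfolding XN_def by simp
    also have "\<dots> = ggN N q" using gg_sym[OF assms(2)] qN by simp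
    finally show ?thesis .
  qed
  have K: "DeltaN N * (1 + rhoN N ^ N) > 0" using K_pos assms(1) by simp
  define Kd where "Kd = DeltaN N * (1 + rhoN N ^ N)"
  have h0: "hhN N 0 = 1 - rhoN N ^ N" unfolding hhN_def by simp
  have "eff_res N u v = 2 * (ggN N 0 - ggN N q)"
    using eff_res_X[OF assms(1-4)] Xuu Xvu Xuv by simp
  also have "\<dots> = 2 * ((hhN N q - hhN N 0) / Kd)"
  proof -
    have "ggN N 0 - ggN N q = (hhN N q - hhN N 0) / Kd"
      unfolding ggN_def g0N_def Kd_def[symmetric] by (simp add: diff_divide_distrib)
    then show ?thesis by simp
  qed
  also have "\<dots> = 2 / Kd * (rhoN N ^ N - 1 + hhN N q)" unfolding h0 by (rule alg_aux)
  also have "\<dots> = resist_formula N q" by (simp only: resist_hh Kd_def add.commute[of 1 "rhoN N ^ N"])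
  finally have main: "eff_res N u v = resist_formula N q" .
  have mn: "eff_res N u v = resist_formula N (min q (N - q))"
  proof (cases "q \<le> N - q")
    case True
    then have "min q (N - q) = q" by (rule min_absorb1)
    then show ?thesis using main by simp
  next
    case False
    then have "min q (N - q) = N - q" by simp
    moreover have "resist_formula N q = resist_formula N (N - q)" using sym qN by blast
    ultimately show ?thesis using main by simp
  qed
  have pos: "u \<noteq> v \<longrightarrow> eff_res N u v > 0"
  proof
    assume "u \<noteq> v"
    then have "q \<noteq> 0" unfolding q_def idx_form[OF assms(4,3)] using assms(3,4) by auto
    then have "rhoN N ^ N - 1 + hhN N q > 0" using num_pos assms(1) qN by simp
    moreover have "DeltaN N * (rhoN N ^ N + 1) > 0" using K by (simp only: add.commute[of 1 "rhoN N ^ N"])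
    then have "2 / (DeltaN N * (rhoN N ^ N + 1)) > 0" by (rule divide_pos_pos[rotated]) simp
    ultimately show "eff_res N u v > 0" unfolding main resist_hh by (rule mult_pos_pos[rotated])
  qed
  show ?thesis by (intro conjI) (rule main, rule sym, rule mn, rule pos)
qed


end
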